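(* Let $\mathbb{K}$ be a field, $n>1$, $a=\sum_{j=0}^d c_j s^j\in\mathbb{K}[s]^n$ a non-zero row vector of degree $d$, and $A\in\mathbb{K}^{(2d+1)\times n(d+1)}$ the matrix whose $(i,\,kn+r)$ entry ($1\le i\le 2d+1$, $0\le k\le d$, $1\le r\le n$) is the $r$-th entry of $c_{i-1-k}$ (zero if $i-1-k\notin\{0,\dots,d\}$). With $\tilde q$ and $b_r$ as in the context, the leading vectors $LV(b_r^\flat)$, $r\in\tilde q$, are linearly independent over $\mathbb{K}$.
   Context: A column of a matrix is pivotal if it is either the first column and non-zero, or linearly independent of all previous columns; otherwise non-pivotal. $p$ is the set of pivotal indices of $A$, $q$ the set of non-pivotal indices, and $\tilde q=\{\min\varrho\mid\varrho\in q/(n)\}$ the basic non-pivotal indices. For $i\in q$ write uniquely $A_{*i}=\sum_{\{j\in p\mid j<i\}}\alpha^{(i)}_jA_{*j}$ and set $b_i=e_i-\sum_{\{j\in p\mid j<i\}}\alpha^{(i)}_je_j$. For $v=[w_0;\dots;w_d]\in\mathbb{K}^{n(d+1)}$ ($w_i\in\mathbb{K}^n$), $v^\flat=\sum_i s^iw_i$. For non-zero $h\in\mathbb{K}[s]^n$ with $t=\deg(h)=\max_i\deg(h_i)$, $LV(h)\in\mathbb{K}^n$ is the vector of coefficients of $s^t$ in $h_1,\dots,h_n$. *)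

theory Defs
  imports "HOL-Computational_Algebra.Polynomial"
begin

text \<open>Conventions: vectors in K^m are functions nat => 'a, only the entries with
index in {1..m} are relevant; matrices are functions nat => nat => 'a with rows
{1..m} and columns {1..N}. Vectors of polynomials in K[s]^n are functions
nat => 'a poly with relevant indices {1..n}.\<close>

definition sylv_mat :: "nat \<Rightarrow> nat \<Rightarrow> (nat \<Rightarrow> 'a::field poly) \<Rightarrow> nat \<Rightarrow> nat \<Rightarrow> 'a" where
  "sylv_mat n d a i c =
     (let k = (c - 1) div n; r = (c - 1) mod n + 1
      in if k \<le> i - 1 \<and> i - 1 - k \<le> d then coeff (a r) (i - 1 - k) else 0)"

definition in_col_span :: "nat \<Rightarrow> (nat \<Rightarrow> nat \<Rightarrow> 'a::field) \<Rightarrow> nat set \<Rightarrow> nat \<Rightarrow> bool" where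
  "in_col_span m M S j \<longleftrightarrow> (\<exists>\<beta>. \<forall>i\<in>{1..m}. M i j = (\<Sum>j'\<in>S. \<beta> j' * M i j'))"

definition pivots :: "nat \<Rightarrow> nat \<Rightarrow> (nat \<Rightarrow> nat \<Rightarrow> 'a::field) \<Rightarrow> nat set" where
  "pivots m N M = {j \<in> {1..N}. \<not> in_col_span m M {1..<j} j}"

definition nonpivots :: "nat \<Rightarrow> nat \<Rightarrow> (nat \<Rightarrow> nat \<Rightarrow> 'a::field) \<Rightarrow> nat set" where
  "nonpivots m N M = {1..N} - pivots m N M"

definition basic_nonpivots :: "nat \<Rightarrow> nat set \<Rightarrow> nat set" where
  "basic_nonpivots n q = {Min {j \<in> q. j mod n = i mod n} | i. i \<in> q}"

definition alpha :: "nat \<Rightarrow> nat \<Rightarrow> (nat \<Rightarrow> nat \<Rightarrow> 'a::field) \<Rightarrow> nat \<Rightarrow> nat \<Rightarrow> 'a" where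
  "alpha m N M i = (SOME \<alpha>. \<forall>r\<in>{1..m}.
      M r i = (\<Sum>j\<in>{j \<in> pivots m N M. j < i}. \<alpha> j * M r j))"

definition bvec :: "nat \<Rightarrow> nat \<Rightarrow> (nat \<Rightarrow> nat \<Rightarrow> 'a::field) \<Rightarrow> nat \<Rightarrow> nat \<Rightarrow> 'a" where
  "bvec m N M i = (\<lambda>l. if l \<in> {1..N} then
       (if l = i then 1 else 0)
       - (if l \<in> pivots m N M \<and> l < i then alpha m N M i l else 0)
     else 0)"

definition flat :: "nat \<Rightarrow> nat \<Rightarrow> (nat \<Rightarrow> 'a::field) \<Rightarrow> nat \<Rightarrow> 'a poly" where
  "flat n d v = (\<lambda>r. \<Sum>k\<le>d. monom (v (k * n + r)) k)"

definition pdeg :: "nat \<Rightarrow> (nat \<Rightarrow> 'a::zero poly) \<Rightarrow> nat" where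
  "pdeg n h = Max {degree (h r) | r. r \<in> {1..n}}"

definition LV :: "nat \<Rightarrow> (nat \<Rightarrow> 'a::zero poly) \<Rightarrow> nat \<Rightarrow> 'a" where
  "LV n h = (\<lambda>r. coeff (h r) (pdeg n h))"

definition lin_indep_family :: "nat \<Rightarrow> nat set \<Rightarrow> (nat \<Rightarrow> nat \<Rightarrow> 'a::field) \<Rightarrow> bool" where
  "lin_indep_family n I f \<longleftrightarrow>
     (\<forall>\<gamma>. (\<forall>r\<in>{1..n}. (\<Sum>i\<in>I. \<gamma> i * f i r) = 0) \<longrightarrow> (\<forall>i\<in>I. \<gamma> i = 0))"

end

theory Submission
  imports Defs
begin

lemma bvec_gt:
  assumes "i < l" shows "bvec m N M i l = 0"
  using assms unfolding bvec_def by auto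

lemma bvec_self:
  assumes "i \<in> nonpivots m N M" shows "bvec m N M i i = 1"
  using assms unfolding bvec_def nonpivots_def by auto

lemma coeff_flat:
  "coeff (flat n d v r) k = (if k \<le> d then v (k*n+r) else 0)"
proof -
  have "coeff (flat n d v r) k = (\<Sum>k'\<in>{..d}. coeff (monom (v (k'*n+r)) k') k)"
    unfolding flat_def by (rule coeff_sum)
  also have "\<dots> = (\<Sum>k'\<in>{..d}. if k' = k then v (k'*n+r) else 0)"
    by (rule sum.cong) (auto simp only: coeff_monom)
  also have "\<dots> = (if k \<in> {..d} then v (k*n+r) else 0)"
    by (rule sum.delta) simp
  finally show ?thesis by (simp only: atMost_iff)
qed

lemma idx_decomp:
  fixes i n :: nat
  assumes "n > 0" "i \<ge> 1"
  shows "i = ((i-1) div n) * n + ((i-1) mod n + 1)"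
proof -
  have "(i-1) div n * n + (i-1) mod n = i-1" by simp
  thus ?thesis using assms(2) by linarith
qed

lemma LV_bvec:
  fixes M :: "nat \<Rightarrow> nat \<Rightarrow> 'a::field"
  assumes n: "n > 0" and i: "i \<in> nonpivots m (n*(d+1)) M" and r: "r \<in> {1..n}"
  shows "LV n (flat n d (bvec m (n*(d+1)) M i)) r = bvec m (n*(d+1)) M i (((i-1) div n) * n + r)"
proof -
  let ?b = "bvec m (n*(d+1)) M i"
  let ?k = "(i-1) div n" and ?r = "(i-1) mod n + 1"
  have i1: "i \<ge> 1" "i \<le> n*(d+1)" using i unfolding nonpivots_def by auto
  have dec: "i = ?k * n + ?r" using idx_decomp[OF n i1(1)] .
  have rr: "?r \<in> {1..n}" using mod_less_divisor[OF n, of "i-1"] by simp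
  have kd: "?k \<le> d"
  proof -
    have "i - 1 < n*(d+1)" using i1 by simp
    hence "(i-1) div n < d+1" by (simp add: less_mult_imp_div_less mult.commute)
    thus ?thesis by simp
  qed
  have deg_le: "degree (flat n d ?b r') \<le> ?k" if "r' \<in> {1..n}" for r'
  proof (rule degree_le)
    show "\<forall>j>?k. coeff (flat n d ?b r') j = 0"
    proof (intro allI impI)
      fix j assume j: "?k < j"
      have "Suc ?k \<le> j" using j by simp
      hence "Suc ?k * n \<le> j * n" by (rule mult_le_mono1)
      hence "?k * n + n \<le> j * n" by simp
      moreover have "?r \<le> n" using rr by simp
      moreover have "r' \<ge> 1" using that by simp
      ultimately have "i < j*n + r'" using dec by linarith
      thus "coeff (flat n d ?b r') j = 0" by (simp add: coeff_flat bvec_gt)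
    qed
  qed
  have c1: "coeff (flat n d ?b ?r) ?k = 1"
    using kd dec bvec_self[OF i] by (simp add: coeff_flat)
  have "?k \<le> degree (flat n d ?b ?r)" by (rule le_degree, simp only: c1, simp)
  hence degr: "degree (flat n d ?b ?r) = ?k"
    using deg_le[OF rr] by simp
  have "pdeg n (flat n d ?b) = ?k"
    unfolding pdeg_def
  proof (rule Max_eqI)
    show "finite {degree (flat n d ?b r) |r. r \<in> {1..n}}" by simp
    show "\<And>y. y \<in> {degree (flat n d ?b r) |r. r \<in> {1..n}} \<Longrightarrow> y \<le> ?k" using deg_le by blast
    show "?k \<in> {degree (flat n d ?b r) |r. r \<in> {1..n}}" using degr rr by force
  qed
  thus ?thesis unfolding LV_def using kd by (simp add: coeff_flat)
qed

theorem lemma10: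
  fixes a :: "nat \<Rightarrow> 'a::field poly" and n d :: nat
  assumes "n > 1"
    and "\<exists>r\<in>{1..n}. a r \<noteq> 0"
    and "d = pdeg n a"
  shows "lin_indep_family n
           (basic_nonpivots n (nonpivots (2*d+1) (n*(d+1)) (sylv_mat n d a)))
           (\<lambda>i. LV n (flat n d (bvec (2*d+1) (n*(d+1)) (sylv_mat n d a) i)))"
proof -
  define M where "M = sylv_mat n d a"
  define m where "m = 2*d+1"
  define q where "q = nonpivots m (n*(d+1)) M"
  define I where "I = basic_nonpivots n q"
  define \<rho> where "\<rho> = (\<lambda>i::nat. (i-1) mod n + 1)"
  have n: "n > 0" using assms(1) by simp
  have qsub: "q \<subseteq> {1..n*(d+1)}" unfolding q_def nonpivots_def by auto
  have Iq: "I \<subseteq> q"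
  proof
    fix x assume "x \<in> I"
    then obtain i where i: "i \<in> q" "x = Min {j \<in> q. j mod n = i mod n}"
      unfolding I_def basic_nonpivots_def by auto
    have "finite {j \<in> q. j mod n = i mod n}" by (rule finite_subset[of _ "{1..n*(d+1)}"]) (use qsub in auto)
    moreover have "{j \<in> q. j mod n = i mod n} \<noteq> {}" using i by auto
    ultimately show "x \<in> q" using i Min_in by fastforce
  qed
  have finI: "finite I" by (rule finite_subset[OF subset_trans[OF Iq qsub]]) simp
  have inj: "x = y" if xyI: "x \<in> I" "y \<in> I" "\<rho> x = \<rho> y" for x y
  proof -
    have fq: "finite {j \<in> q. j mod n = i mod n}" for i
      by (rule finite_subset[of _ "{1..n*(d+1)}"]) (use qsub in auto)
    obtain i where i: "i \<in> q" "x = Min {j \<in> q. j mod n = i mod n}"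
      using xyI(1) unfolding I_def basic_nonpivots_def by auto
    obtain i' where i': "i' \<in> q" "y = Min {j \<in> q. j mod n = i' mod n}"
      using xyI(2) unfolding I_def basic_nonpivots_def by auto
    have xm: "x mod n = i mod n" using i Min_in[OF fq, of i] by auto
    have ym: "y mod n = i' mod n" using i' Min_in[OF fq, of i'] by auto
    have x1: "x \<ge> 1" "y \<ge> 1" using that Iq qsub by auto
    have "(x-1) mod n = (y-1) mod n" using that(3) unfolding \<rho>_def by simp
    hence "Suc (x-1) mod n = Suc (y-1) mod n" by (metis mod_Suc_eq)
    hence "x mod n = y mod n" using x1 by simp
    hence "i mod n = i' mod n" using xm ym by simp
    thus ?thesis using i i' by simp
  qed
  let ?L = "\<lambda>i. LV n (flat n d (bvec m (n*(d+1)) M i))"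
  have LV1: "?L i r = bvec m (n*(d+1)) M i (((i-1) div n) * n + r)" if "i \<in> I" "r \<in> {1..n}" for i r
    using LV_bvec[OF n, of i m d M r] that Iq unfolding q_def by auto
  have self: "?L i (\<rho> i) = 1" if "i \<in> I" for i
  proof -
    have i1: "i \<ge> 1" using that Iq qsub by auto
    have ri: "\<rho> i \<in> {1..n}" using mod_less_divisor[OF n, of "i-1"] unfolding \<rho>_def by simp
    have e: "((i-1) div n)*n + \<rho> i = i" using idx_decomp[OF n i1] unfolding \<rho>_def by linarith
    have "?L i (\<rho> i) = bvec m (n*(d+1)) M i (((i-1) div n)*n + \<rho> i)" by (rule LV1[OF that ri])
    hence "?L i (\<rho> i) = bvec m (n*(d+1)) M i i" by (simp only: e)
    moreover have "i \<in> nonpivots m (n*(d+1)) M" using that Iq unfolding q_def by blast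
    ultimately show ?thesis using bvec_self by metis
  qed
  have zero: "?L i r = 0" if "i \<in> I" "r \<in> {1..n}" "\<rho> i < r" for i r
  proof -
    have i1: "i \<ge> 1" using that Iq qsub by auto
    have "i < ((i-1) div n) * n + r"
      using idx_decomp[OF n i1] that(3) unfolding \<rho>_def by linarith
    hence "bvec m (n*(d+1)) M i (((i-1) div n) * n + r) = 0" by (rule bvec_gt)
    thus ?thesis using LV1[OF that(1,2)] by simp
  qed
  have "\<forall>i\<in>I. \<gamma> i = 0" if H: "\<forall>r\<in>{1..n}. (\<Sum>i\<in>I. \<gamma> i * ?L i r) = 0" for \<gamma>
  proof (rule ccontr)
    assume "\<not> (\<forall>i\<in>I. \<gamma> i = 0)"
    define J where "J = {i \<in> I. \<gamma> i \<noteq> 0}"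
    have J: "J \<noteq> {}" "finite J" "J \<subseteq> I" using \<open>\<not> _\<close> finI unfolding J_def by auto
    define r0 where "r0 = Max (\<rho> ` J)"
    have "r0 \<in> \<rho> ` J" unfolding r0_def using J by (intro Max_in) auto
    then obtain i0 where i0: "i0 \<in> J" "\<rho> i0 = r0" by auto
    have r0: "r0 \<in> {1..n}" using i0 mod_less_divisor[OF n, of "i0-1"] unfolding \<rho>_def by auto
    have S1: "(\<Sum>i\<in>I. \<gamma> i * ?L i r0) = \<gamma> i0 * ?L i0 r0 + (\<Sum>i\<in>I-{i0}. \<gamma> i * ?L i r0)"
      using finI i0(1) J(3) by (intro sum.remove) auto
    have S2: "(\<Sum>i\<in>I-{i0}. \<gamma> i * ?L i r0) = 0"
    proof (rule sum.neutral, rule ballI)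
      fix i assume i: "i \<in> I - {i0}"
      show "\<gamma> i * ?L i r0 = 0"
      proof (cases "\<gamma> i = 0")
        case False
        hence "i \<in> J" using i unfolding J_def by auto
        hence "\<rho> i \<in> \<rho> ` J" by (rule imageI)
        hence "\<rho> i \<le> r0" unfolding r0_def by (rule Max_ge[OF finite_imageI[OF J(2)]])
        moreover have "\<rho> i \<noteq> r0"
        proof
          assume "\<rho> i = r0"
          have iI: "i \<in> I" using i by simp
          have i0I: "i0 \<in> I" using i0(1) J(3) by blast
          have "i = i0" using inj[OF iI i0I] \<open>\<rho> i = r0\<close> i0(2) by simp
          thus False using i by simp
        qed
        ultimately have "\<rho> i < r0" by simp
        moreover have "i \<in> I" using i by simp
        ultimately have "?L i r0 = 0" using zero[of i r0] r0 by simp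
        thus ?thesis by simp
      qed simp
    qed
    have S3: "?L i0 r0 = 1" using self[of i0] i0 J(3) by auto
    have "(\<Sum>i\<in>I. \<gamma> i * ?L i r0) = \<gamma> i0" unfolding S1 S2 S3 by simp
    moreover have "\<gamma> i0 \<noteq> 0" using i0(1) unfolding J_def by simp
    ultimately show False using H r0 by simp
  qed
  hence main: "lin_indep_family n I ?L" unfolding lin_indep_family_def by blast
  show ?thesis using main unfolding I_def q_def M_def m_def by assumption
qed

end
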